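(* Let $d\ge4$ be even. Let $C^0=\{L^0_{a,a}\}_{a=0}^{d-1}$ and $C^s=\{L^s_{1,i}\}_{i=0}^{d-1}$ for $s=1,2$. Then $C^0\cup C^1\cup C^2$ consists of $3d$ pairwise disjoint lines on ${\rm F}_d$.
   Context: ${\rm F}_d\subset\mathbb{P}^3(\mathbb{C})$ is the surface $x^d-y^d-z^d+w^d=0$. Fix a primitive $d$-th root of unity $\eta$ and any $v\in\mathbb{C}$ with $v^d=-1$. For $k,i\in\{0,\dots,d-1\}$ define the lines $L^0_{k,i}:\{y=\eta^i x,\ w=\eta^k z\}$, $L^1_{k,i}:\{x=\eta^{k+i}z,\ y=\eta^i w\}$, $L^2_{k,i}:\{x=v\eta^i w,\ y=v\eta^{k+i}z\}$, all lying on ${\rm F}_d$. *)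

theory Defs
  imports Complex_Main
begin

text \<open>Points of P^3(C) are represented by nonzero homogeneous coordinates (x,y,z,w).
  All sets below are closed under nonzero scaling, so containment and disjointness
  of these cones coincide with containment and disjointness in P^3(C).\<close>

type_synonym hpt = "complex \<times> complex \<times> complex \<times> complex"

definition Fermat_surface :: "nat \<Rightarrow> hpt set" where
  "Fermat_surface d = {(x,y,z,w). (x,y,z,w) \<noteq> (0,0,0,0) \<and> x^d - y^d - z^d + w^d = 0}"

definition primitive_root_of_unity :: "nat \<Rightarrow> complex \<Rightarrow> bool" where
  "primitive_root_of_unity d \<eta> \<longleftrightarrow> \<eta> ^ d = 1 \<and> (\<forall>k. 0 < k \<and> k < d \<longrightarrow> \<eta> ^ k \<noteq> 1)"

definition L0 :: "complex \<Rightarrow> nat \<Rightarrow> nat \<Rightarrow> hpt set" where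
  "L0 \<eta> k i = {(x,y,z,w). (x,y,z,w) \<noteq> (0,0,0,0) \<and> y = \<eta>^i * x \<and> w = \<eta>^k * z}"

definition L1 :: "complex \<Rightarrow> nat \<Rightarrow> nat \<Rightarrow> hpt set" where
  "L1 \<eta> k i = {(x,y,z,w). (x,y,z,w) \<noteq> (0,0,0,0) \<and> x = \<eta>^(k+i) * z \<and> y = \<eta>^i * w}"

definition L2 :: "complex \<Rightarrow> complex \<Rightarrow> nat \<Rightarrow> nat \<Rightarrow> hpt set" where
  "L2 \<eta> v k i = {(x,y,z,w). (x,y,z,w) \<noteq> (0,0,0,0) \<and> x = v * \<eta>^i * w \<and> y = v * \<eta>^(k+i) * z}"

end

theory Submission
  imports Defs
begin

lemma prim_nz: assumes "primitive_root_of_unity d \<eta>" "0 < d" shows "\<eta> \<noteq> 0"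
  using assms by (auto simp: primitive_root_of_unity_def power_0_left)

lemma prim_d: "primitive_root_of_unity d \<eta> \<Longrightarrow> \<eta>^d = 1"
  by (simp add: primitive_root_of_unity_def)

lemma prim_pow: assumes "primitive_root_of_unity d \<eta>" shows "(\<eta>^a)^d = 1"
proof -
  have "(\<eta>^a)^d = (\<eta>^d)^a" by (metis power_mult mult.commute)
  thus ?thesis using prim_d[OF assms] by simp
qed

lemma cancel_h: "(a - b) * x = 0 \<Longrightarrow> a \<noteq> b \<Longrightarrow> x = (0::complex)"
  by simp

lemma prim_mod: assumes "primitive_root_of_unity d \<eta>" shows "\<eta>^n = \<eta>^(n mod d)"
proof -
  have "\<eta>^n = \<eta>^(d*(n div d) + n mod d)" by simp
  also have "\<dots> = (\<eta>^d)^(n div d) * \<eta>^(n mod d)" by (simp only: power_add power_mult)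
  finally show ?thesis using prim_d[OF assms] by simp
qed

lemma prim_inj_aux: assumes "primitive_root_of_unity d \<eta>" "a < b" "b < d" "\<eta>^a = \<eta>^b"
  shows False
proof -
  have nz: "\<eta> \<noteq> 0" using prim_nz assms by auto
  have "\<eta>^b = \<eta>^a * \<eta>^(b-a)" using assms(2) by (simp add: power_add[symmetric])
  hence "\<eta>^(b-a) = 1" using assms(4) nz by simp
  thus False using assms unfolding primitive_root_of_unity_def by auto
qed

lemma prim_inj: assumes "primitive_root_of_unity d \<eta>" "a < d" "b < d" "\<eta>^a = \<eta>^b"
  shows "a = b"
  using prim_inj_aux[OF assms(1)] assms by (metis linorder_neqE_nat)

lemma h1: "y = A*x \<Longrightarrow> y = B*x \<Longrightarrow> (A-B)*x = (0::complex)" by algebra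
lemma h2: "x = e*A*z \<Longrightarrow> x = e*B*z \<Longrightarrow> (A-B)*(e*z) = (0::complex)" by algebra
lemma h3: "x = v*A*w \<Longrightarrow> x = v*B*w \<Longrightarrow> (A-B)*(v*w) = (0::complex)" by algebra
lemma h4: "y = v*(e*A)*z \<Longrightarrow> y = v*(e*B)*z \<Longrightarrow> (A-B)*(v*e*z) = (0::complex)" by algebra
lemma alg12: "x = e*A*z \<Longrightarrow> y = A*w \<Longrightarrow> x = v*B*w \<Longrightarrow> y = v*e*B*z \<Longrightarrow> e*(A*A - v^2*B*B)*z = (0::complex)"
  by algebra
lemma alg02: "y = E*x \<Longrightarrow> w = E*z \<Longrightarrow> x = v*I*w \<Longrightarrow> y = v*e*I*z \<Longrightarrow> v*I*(E*E - e)*z = (0::complex)"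
  by algebra
lemma alg01: "y = E*x \<Longrightarrow> w = E*z \<Longrightarrow> x = e*I*z \<Longrightarrow> y = I*w \<Longrightarrow> E*I*(e - 1)*z = (0::complex)"
  by algebra

lemma even_mod2: "even (d::nat) \<Longrightarrow> even ((2*a) mod d)"
proof -
  assume "even d" then obtain m where m: "d = 2*m" by blast
  have "(2*a) mod (2*m) = 2*(a mod m)" by (rule mult_mod_right[symmetric])
  thus ?thesis using m by simp
qed

lemma L0_L0: assumes "primitive_root_of_unity d \<eta>" "a < d" "b < d" "a \<noteq> b"
  "p \<in> L0 \<eta> a a" "p \<in> L0 \<eta> b b" shows False
proof -
  obtain x y z w where p: "p = (x,y,z,w)" by (cases p) auto
  have ne: "\<eta>^a \<noteq> \<eta>^b" using prim_inj[OF assms(1-3)] assms(4) by blast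
  have e: "(x,y,z,w) \<noteq> (0,0,0,0)" "y = \<eta>^a*x" "w = \<eta>^a*z" "y = \<eta>^b*x" "w = \<eta>^b*z"
    using assms(5,6) by (auto simp: L0_def p)
  have "(\<eta>^a - \<eta>^b) * x = 0" using h1[OF e(2) e(4)] .
  hence "x = 0" using ne by (rule cancel_h)
  moreover have "(\<eta>^a - \<eta>^b) * z = 0" using h1[OF e(3) e(5)] .
  hence "z = 0" using ne by (rule cancel_h)
  ultimately show False using e by simp
qed

lemma L1_L1: assumes "primitive_root_of_unity d \<eta>" "a < d" "b < d" "a \<noteq> b"
  "p \<in> L1 \<eta> 1 a" "p \<in> L1 \<eta> 1 b" shows False
proof -
  obtain x y z w where p: "p = (x,y,z,w)" by (cases p) auto
  have nz: "\<eta> \<noteq> 0" using prim_nz assms by auto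
  have ne: "\<eta>^a \<noteq> \<eta>^b" using prim_inj[OF assms(1-3)] assms(4) by blast
  have e: "(x,y,z,w) \<noteq> (0,0,0,0)" "x = \<eta>*\<eta>^a*z" "y = \<eta>^a*w" "x = \<eta>*\<eta>^b*z" "y = \<eta>^b*w"
    using assms(5,6) by (auto simp: L1_def p)
  have "(\<eta>^a - \<eta>^b) * (\<eta> * z) = 0" using h2[OF e(2) e(4)] .
  hence "\<eta> * z = 0" using ne by (rule cancel_h)
  hence "z = 0" using nz by simp
  moreover have "(\<eta>^a - \<eta>^b) * w = 0" using h1[OF e(3) e(5)] .
  hence "w = 0" using ne by (rule cancel_h)
  ultimately show False using e by simp
qed

lemma L2_L2: assumes "primitive_root_of_unity d \<eta>" "a < d" "b < d" "a \<noteq> b" "v \<noteq> 0"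
  "p \<in> L2 \<eta> v 1 a" "p \<in> L2 \<eta> v 1 b" shows False
proof -
  obtain x y z w where p: "p = (x,y,z,w)" by (cases p) auto
  have nz: "\<eta> \<noteq> 0" using prim_nz assms by auto
  have ne: "\<eta>^a \<noteq> \<eta>^b" using prim_inj[OF assms(1-3)] assms(4) by blast
  have c1: "(x,y,z,w) \<noteq> (0,0,0,0) \<and> x = v*\<eta>^a*w \<and> y = v*\<eta>^(1+a)*z"
    using assms(6)[unfolded p L2_def mem_Collect_eq case_prod_conv] by blast
  have c2: "x = v*\<eta>^b*w \<and> y = v*\<eta>^(1+b)*z"
    using assms(7)[unfolded p L2_def mem_Collect_eq case_prod_conv] by blast
  have pa: "\<eta>^(1+a) = \<eta>*\<eta>^a" "\<eta>^(1+b) = \<eta>*\<eta>^b" by simp_all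
  have e: "(x,y,z,w) \<noteq> (0,0,0,0)" "x = v*\<eta>^a*w" "y = v*(\<eta>*\<eta>^a)*z" "x = v*\<eta>^b*w" "y = v*(\<eta>*\<eta>^b)*z"
    using c1 c2 unfolding pa by blast+
  have "(\<eta>^a - \<eta>^b) * (v * \<eta> * z) = 0" using h4[OF e(3) e(5)] .
  hence "v * \<eta> * z = 0" using ne by (rule cancel_h)
  hence "z = 0" using nz assms(5) by simp
  moreover have "(\<eta>^a - \<eta>^b) * (v * w) = 0" using h3[OF e(2) e(4)] .
  hence "v * w = 0" using ne by (rule cancel_h)
  hence "w = 0" using assms(5) by simp
  ultimately show False using e by simp
qed

lemma L0_L1: assumes "primitive_root_of_unity d \<eta>" "1 < d"
  "p \<in> L0 \<eta> a a" "p \<in> L1 \<eta> 1 i" shows False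
proof -
  obtain x y z w where p: "p = (x,y,z,w)" by (cases p) auto
  have nz: "\<eta> \<noteq> 0" using prim_nz assms by auto
  have ne: "\<eta> \<noteq> 1" using assms unfolding primitive_root_of_unity_def by (metis power_one_right zero_less_one)
  have e: "(x,y,z,w) \<noteq> (0,0,0,0)" "y = \<eta>^a*x" "w = \<eta>^a*z" "x = \<eta>*\<eta>^i*z" "y = \<eta>^i*w"
    using assms(3,4) by (auto simp: L0_def L1_def p)
  have "\<eta>^a * \<eta>^i * (\<eta> - 1) * z = 0" using alg01[OF e(2-5)] .
  hence "z = 0" using ne nz by simp
  thus False using e by simp
qed

lemma L0_L2: assumes "primitive_root_of_unity d \<eta>" "4 \<le> d" "even d" "v \<noteq> 0"
  "p \<in> L0 \<eta> a a" "p \<in> L2 \<eta> v 1 i" shows False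
proof -
  obtain x y z w where p: "p = (x,y,z,w)" by (cases p) auto
  have nz: "\<eta> \<noteq> 0" using prim_nz assms by auto
  have ne: "\<eta>^a * \<eta>^a \<noteq> \<eta>"
  proof
    assume h0: "\<eta>^a * \<eta>^a = \<eta>"
    have h: "\<eta>^(2*a) = \<eta>" using h0 by (simp add: mult_2 power_add)
    have "\<eta>^((2*a) mod d) = \<eta>^1" using h prim_mod[OF assms(1), of "2*a"] by simp
    hence "(2*a) mod d = 1" using prim_inj[OF assms(1)] assms(2) by simp
    moreover have "even ((2*a) mod d)" using assms(3) by (rule even_mod2)
    ultimately show False by simp
  qed
  have e: "(x,y,z,w) \<noteq> (0,0,0,0)" "y = \<eta>^a*x" "w = \<eta>^a*z" "x = v*\<eta>^i*w" "y = v*\<eta>*\<eta>^i*z"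
    using assms(5,6) by (auto simp: L0_def L2_def p mult.assoc)
  have "v * \<eta>^i * (\<eta>^a * \<eta>^a - \<eta>) * z = 0" using alg02[OF e(2-5)] .
  hence "z = 0" using ne nz assms(4) by simp
  thus False using e by simp
qed

lemma L1_L2: assumes "primitive_root_of_unity d \<eta>" "0 < d" "even d" "v^d = -1"
  "p \<in> L1 \<eta> 1 i" "p \<in> L2 \<eta> v 1 j" shows False
proof -
  obtain x y z w where p: "p = (x,y,z,w)" by (cases p) auto
  have e: "(x,y,z,w) \<noteq> (0,0,0,0)" "x = \<eta>*\<eta>^i*z" "y = \<eta>^i*w" "x = v*\<eta>^j*w" "y = v*\<eta>*\<eta>^j*z"
    using assms(5,6) by (auto simp: L1_def L2_def p mult.assoc)
  have nz: "\<eta> \<noteq> 0" using prim_nz assms by auto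
  have "\<eta> * (\<eta>^i * \<eta>^i - v^2 * \<eta>^j * \<eta>^j) * z = 0" using alg12[OF e(2-5)] .
  moreover have "\<eta>^i * \<eta>^i \<noteq> v^2 * \<eta>^j * \<eta>^j"
  proof
    assume h: "\<eta>^i * \<eta>^i = v^2 * \<eta>^j * \<eta>^j"
    obtain m where m: "d = 2*m" using assms(3) by blast
    have pw: "(\<eta>^k * \<eta>^k)^m = 1" for k
    proof -
      have "(\<eta>^k * \<eta>^k)^m = \<eta>^(2*k*m)" by (simp add: power_add[symmetric] mult_2 power_mult)
      also have "2*k*m = d*k" by (simp add: m)
      finally show ?thesis using prim_d[OF assms(1)] by (simp add: power_mult)
    qed
    have pv: "(v^2)^m = -1" using assms(4) by (simp add: m power_mult)
    have "(\<eta>^i * \<eta>^i)^m = (v^2)^m * (\<eta>^j * \<eta>^j)^m" using h by (simp add: power_mult_distrib mult.assoc)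
    hence "(1::complex) = -1" by (simp only: pw pv) simp
    thus False by simp
  qed
  ultimately have "z = 0" using nz by simp
  thus False using e nz by simp
qed

lemma L0_surf: assumes "primitive_root_of_unity d \<eta>" shows "L0 \<eta> a a \<subseteq> Fermat_surface d"
proof
  fix p assume "p \<in> L0 \<eta> a a"
  then obtain x y z w where p: "p = (x,y,z,w)" "(x,y,z,w) \<noteq> (0,0,0,0)" "y = \<eta>^a*x" "w = \<eta>^a*z"
    by (cases p) (auto simp: L0_def)
  have E: "(\<eta>^a)^d = 1" using prim_pow[OF assms] .
  have "y^d = (\<eta>^a)^d * x^d" "w^d = (\<eta>^a)^d * z^d" using p(3,4) by (simp_all only: power_mult_distrib)
  hence "y^d = x^d" "w^d = z^d" by (simp_all only: E mult_1)
  hence "x^d - y^d - z^d + w^d = 0" by simp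
  thus "p \<in> Fermat_surface d" using p(1,2) by (simp add: Fermat_surface_def)
qed

lemma L1_surf: assumes "primitive_root_of_unity d \<eta>" shows "L1 \<eta> 1 i \<subseteq> Fermat_surface d"
proof
  fix p assume hp: "p \<in> L1 \<eta> 1 i"
  have "\<exists>x y z w. p = (x,y,z,w) \<and> (x,y,z,w) \<noteq> (0,0,0,0) \<and> x = \<eta>^(1+i)*z \<and> y = \<eta>^i*w"
    using hp unfolding L1_def by (cases p) blast
  then obtain x y z w where p: "p = (x,y,z,w)" "(x,y,z,w) \<noteq> (0,0,0,0)" "x = \<eta>^(1+i)*z" "y = \<eta>^i*w"
    by blast
  have E1: "(\<eta>^(1+i))^d = 1" using prim_pow[OF assms] .
  have E2: "(\<eta>^i)^d = 1" using prim_pow[OF assms] .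
  have "x^d = (\<eta>^(1+i))^d * z^d" "y^d = (\<eta>^i)^d * w^d" using p(3,4) by (simp_all only: power_mult_distrib)
  hence "x^d = z^d" "y^d = w^d" by (simp_all only: E1 E2 mult_1)
  hence "x^d - y^d - z^d + w^d = 0" by simp
  thus "p \<in> Fermat_surface d" using p(1,2) by (simp add: Fermat_surface_def)
qed

lemma L2_surf: assumes "primitive_root_of_unity d \<eta>" "v^d = -1" shows "L2 \<eta> v 1 i \<subseteq> Fermat_surface d"
proof
  fix p assume hp: "p \<in> L2 \<eta> v 1 i"
  have "\<exists>x y z w. p = (x,y,z,w) \<and> (x,y,z,w) \<noteq> (0,0,0,0) \<and> x = v*\<eta>^i*w \<and> y = v*\<eta>^(1+i)*z"
    using hp unfolding L2_def by (cases p) blast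
  then obtain x y z w where p: "p = (x,y,z,w)" "(x,y,z,w) \<noteq> (0,0,0,0)" "x = v*\<eta>^i*w" "y = v*\<eta>^(1+i)*z"
    by blast
  have E1: "(\<eta>^(1+i))^d = 1" using prim_pow[OF assms(1)] .
  have E2: "(\<eta>^i)^d = 1" using prim_pow[OF assms(1)] .
  have "x^d = v^d * (\<eta>^i)^d * w^d" "y^d = v^d * (\<eta>^(1+i))^d * z^d" using p(3,4) by (simp_all only: power_mult_distrib)
  hence "x^d = -(w^d)" "y^d = -(z^d)" by (simp_all only: E1 E2 assms(2) mult_1_right mult_minus1)
  hence "x^d - y^d - z^d + w^d = 0" by simp
  thus "p \<in> Fermat_surface d" using p(1,2) by (simp add: Fermat_surface_def)
qed

theorem proposition4p1:
  fixes d :: nat and \<eta> v :: complex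
  assumes "d \<ge> 4" and "even d"
    and "primitive_root_of_unity d \<eta>"
    and "v ^ d = -1"
  defines "C \<equiv> (\<lambda>a. L0 \<eta> a a) ` {..<d} \<union> (\<lambda>i. L1 \<eta> 1 i) ` {..<d}
                \<union> (\<lambda>i. L2 \<eta> v 1 i) ` {..<d}"
  shows "card C = 3 * d
     \<and> (\<forall>A\<in>C. A \<subseteq> Fermat_surface d)
     \<and> (\<forall>A\<in>C. \<forall>B\<in>C. A \<noteq> B \<longrightarrow> A \<inter> B = {})"
proof -
  note pr = assms(3)
  have d0: "0 < d" "1 < d" using assms(1) by auto
  have vnz: "v \<noteq> 0" using assms(4) d0 by (auto simp: power_0_left)
  define F where "F n = (if n < d then L0 \<eta> n n else if n < 2*d then L1 \<eta> 1 (n-d) else L2 \<eta> v 1 (n-2*d))" for n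
  have CF: "C = F ` {..<3*d}"
  proof
    show "C \<subseteq> F ` {..<3*d}"
    proof
      fix A assume "A \<in> C"
      then consider (a) a where "a < d" "A = L0 \<eta> a a" | (b) i where "i < d" "A = L1 \<eta> 1 i"
        | (c) i where "i < d" "A = L2 \<eta> v 1 i" unfolding C_def by blast
      then show "A \<in> F ` {..<3*d}"
      proof cases
        case a thus ?thesis by (intro image_eqI[of _ _ a]) (auto simp: F_def)
      next
        case b thus ?thesis by (intro image_eqI[of _ _ "d+i"]) (auto simp: F_def)
      next
        case c thus ?thesis by (intro image_eqI[of _ _ "2*d+i"]) (auto simp: F_def)
      qed
    qed
  next
    show "F ` {..<3*d} \<subseteq> C"
    proof
      fix A assume "A \<in> F ` {..<3*d}"
      then obtain n where n: "n < 3*d" "A = F n" by auto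
      show "A \<in> C"
      proof (cases "n < d")
        case True thus ?thesis using n unfolding C_def F_def by auto
      next
        case f1: False
        show ?thesis
        proof (cases "n < 2*d")
          case True
          hence "A = L1 \<eta> 1 (n-d)" "n - d < d" using n f1 by (auto simp: F_def)
          thus ?thesis unfolding C_def by blast
        next
          case False
          hence "A = L2 \<eta> v 1 (n-2*d)" "n - 2*d < d" using n f1 by (auto simp: F_def)
          thus ?thesis unfolding C_def by blast
        qed
      qed
    qed
  qed
  have surf: "F n \<subseteq> Fermat_surface d" for n
    unfolding F_def using L0_surf[OF pr] L1_surf[OF pr] L2_surf[OF pr assms(4)] by auto
  have nonempty: "F n \<noteq> {}" for n
  proof -
    have "(1, \<eta>^a, 0, 0) \<in> L0 \<eta> a a" for a by (simp add: L0_def)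
    moreover have "(\<eta>^(1+i), 0, 1, 0) \<in> L1 \<eta> 1 i" for i by (simp add: L1_def)
    moreover have "(0, v*\<eta>^(1+i), 1, 0) \<in> L2 \<eta> v 1 i" for i by (simp add: L2_def)
    ultimately show ?thesis unfolding F_def by (auto simp del: insert_Diff_if)
  qed
  have disj: "F n \<inter> F m = {}" if "n < 3*d" "m < 3*d" "n \<noteq> m" for n m
  proof (rule ccontr)
    assume "F n \<inter> F m \<noteq> {}"
    then obtain p where p: "p \<in> F n" "p \<in> F m" by blast
    have sym: "\<And>A B. p \<in> A \<Longrightarrow> p \<in> B \<Longrightarrow> p \<in> B \<and> p \<in> A" by blast
    show False
    proof (cases "n < d")
      case n1: True
      show False
      proof (cases "m < d")
        case True thus False using L0_L0[OF pr n1 True \<open>n \<noteq> m\<close>] p n1 by (simp add: F_def)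
      next
        case m1: False
        show False
        proof (cases "m < 2*d")
          case True thus False using L0_L1[OF pr d0(2)] p n1 m1 by (simp add: F_def)
        next
          case False thus False using L0_L2[OF pr assms(1,2) vnz] p n1 m1 by (simp add: F_def)
        qed
      qed
    next
      case n1: False
      show False
      proof (cases "n < 2*d")
        case n2: True
        show False
        proof (cases "m < d")
          case True thus False using L0_L1[OF pr d0(2)] p n1 n2 by (simp add: F_def)
        next
          case m1: False
          show False
          proof (cases "m < 2*d")
            case True
            have "n - d < d" "m - d < d" "n - d \<noteq> m - d" using n1 n2 m1 True \<open>n \<noteq> m\<close> by auto
            thus False using L1_L1[OF pr] p n1 n2 m1 True by (simp add: F_def)
          next
            case False thus False using L1_L2[OF pr d0(1) assms(2,4)] p n1 n2 m1 by (simp add: F_def)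
          qed
        qed
      next
        case n2: False
        show False
        proof (cases "m < d")
          case True thus False using L0_L2[OF pr assms(1,2) vnz] p n1 n2 by (simp add: F_def)
        next
          case m1: False
          show False
          proof (cases "m < 2*d")
            case True thus False using L1_L2[OF pr d0(1) assms(2,4)] p n1 n2 m1 by (simp add: F_def)
          next
            case False
            have "n - 2*d < d" "m - 2*d < d" "n - 2*d \<noteq> m - 2*d" using n1 n2 m1 False that by auto
            thus False using L2_L2[OF pr _ _ _ vnz] p n1 n2 m1 False by (simp add: F_def)
          qed
        qed
      qed
    qed
  qed
  have inj: "inj_on F {..<3*d}"
  proof (rule inj_onI)
    fix n m assume "n \<in> {..<3*d}" "m \<in> {..<3*d}" "F n = F m"
    thus "n = m" using disj[of n m] nonempty[of n] by auto
  qed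
  have "card C = 3*d" using CF card_image[OF inj] by simp
  moreover have "\<forall>A\<in>C. A \<subseteq> Fermat_surface d" using CF surf by auto
  moreover have "\<forall>A\<in>C. \<forall>B\<in>C. A \<noteq> B \<longrightarrow> A \<inter> B = {}" using CF disj by auto
  ultimately show ?thesis by blast
qed

end
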